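(* Let $(w_k)_{k\ge0}$ and $(z_k)_{k\ge0}$ be sequences of real numbers, and let $J$ be the infinite matrix \[ J=\begin{bmatrix} w_0&z_0&&&&&\\ w_1&z_1&1&&&&\\ w_2&z_2&0&1&&&\\ w_3&z_3&0&0&1&&\\ w_4&z_4&0&0&0&1&\\ \vdots&\vdots&&&&&\ddots \end{bmatrix}, \] i.e. $J_{i,0}=w_i$, $J_{i,1}=z_i$ for $i\ge0$, $J_{i,i+1}=1$ for $i\ge1$, and all other entries are $0$. Then $J$ is totally positive if and only if both of the following hold: (1) $w_k=z_k=0$ for all $k\ge2$, and $w_0,w_1,z_0,z_1\ge0$; (2) $w_0z_1-w_1z_0\ge0$.
   Context: An infinite matrix is totally positive (TP) if all its minors (of all orders) are nonnegative. *)

theory Defs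
  imports Complex_Main "Jordan_Normal_Form.Determinant"
begin

text \<open>An infinite real matrix is a function nat => nat => real (row index first).
  The minor with row indices r 0 < ... < r (k-1) and column indices c 0 < ... < c (k-1).\<close>
definition inf_minor :: "(nat \<Rightarrow> nat \<Rightarrow> real) \<Rightarrow> nat \<Rightarrow> (nat \<Rightarrow> nat) \<Rightarrow> (nat \<Rightarrow> nat) \<Rightarrow> real" where
  "inf_minor A k r c = det (mat k k (\<lambda>(i, j). A (r i) (c j)))"

definition totally_positive :: "(nat \<Rightarrow> nat \<Rightarrow> real) \<Rightarrow> bool" where
  "totally_positive A \<longleftrightarrow>
     (\<forall>k r c. k \<ge> 1 \<longrightarrow> strict_mono_on {..<k} r \<longrightarrow> strict_mono_on {..<k} c \<longrightarrow>
        inf_minor A k r c \<ge> 0)"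

definition Jmat :: "(nat \<Rightarrow> real) \<Rightarrow> (nat \<Rightarrow> real) \<Rightarrow> nat \<Rightarrow> nat \<Rightarrow> real" where
  "Jmat w z i j = (if j = 0 then w i else if j = 1 then z i
                   else if i \<ge> 1 \<and> j = i + 1 then 1 else 0)"

end

theory Submission imports Defs begin
lemma det1: "det (mat 1 1 f) = (f (0,0) :: 'a::comm_ring_1)"
proof -
  have "det (mat 1 1 f) = (\<Sum>j<1. mat 1 1 f $$ (0,j) * cofactor (mat 1 1 f) 0 j)"
    by (rule laplace_expansion_row) auto
  also have "\<dots> = f (0,0) * det (mat_delete (mat 1 1 f) 0 0)" by (simp add: cofactor_def)
  also have "det (mat_delete (mat 1 1 f) 0 0) = 1" by (rule det_dim_zero) (simp add: mat_delete_def)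
  finally show ?thesis by simp
qed
lemma det2: "det (mat 2 2 f) = (f (0,0) * f (1,1) - f (0,1) * f (1,0) :: 'a::comm_ring_1)"
proof -
  have "det (mat 2 2 f) = (\<Sum>j<2. mat 2 2 f $$ (0,j) * cofactor (mat 2 2 f) 0 j)"
    by (rule laplace_expansion_row) auto
  also have "\<dots> = f (0,0) * det (mat_delete (mat 2 2 f) 0 0) - f (0,1) * det (mat_delete (mat 2 2 f) 0 1)"
    by (simp add: cofactor_def numeral_2_eq_2)
  also have "mat_delete (mat 2 2 f) 0 0 = mat 1 1 (\<lambda>_. f (1,1))"
    by (rule eq_matI) (auto simp: mat_delete_def)
  also have "mat_delete (mat 2 2 f) 0 1 = mat 1 1 (\<lambda>_. f (1,0))"
    by (rule eq_matI) (auto simp: mat_delete_def)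
  finally show ?thesis using det1[of "\<lambda>_. f (1,1)"] det1[of "\<lambda>_. f (1,0)"] by simp
qed

lemma Jrow_big:
  assumes "\<forall>k\<ge>2. w k = 0 \<and> z k = 0" "i \<ge> 2"
  shows "Jmat w z i j = (if j = i + 1 then 1 else 0)"
  using assms unfolding Jmat_def by auto

lemma Jcol_big:
  assumes "j \<ge> 2"
  shows "Jmat w z i j = (if i \<ge> 1 \<and> j = i + 1 then 1 else 0)"
  using assms unfolding Jmat_def by auto

lemma minor_nonneg:
  fixes w z :: "nat \<Rightarrow> real"
  assumes H: "\<forall>k\<ge>2. w k = 0 \<and> z k = 0" and pos: "w 0 \<ge> 0" "w 1 \<ge> 0" "z 0 \<ge> 0" "z 1 \<ge> 0"
    and D: "w 0 * z 1 - w 1 * z 0 \<ge> 0"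
  shows "strict_mono_on {..<k} r \<Longrightarrow> strict_mono_on {..<k} c \<Longrightarrow> inf_minor (Jmat w z) k r c \<ge> 0"
proof (induction k)
  case 0
  then show ?case by (simp add: inf_minor_def)
next
  case (Suc k)
  let ?J = "Jmat w z"
  have Jnn: "?J i j \<ge> 0" for i j
  proof -
    have "i = 0 \<or> i = 1 \<or> i \<ge> 2" by arith
    then show ?thesis using H pos unfolding Jmat_def by (elim disjE) auto
  qed
  have rm: "r i < r j" if "i < j" "j < Suc k" for i j
    using Suc.prems(1) that by (auto simp: strict_mono_on_def)
  have cm: "c i < c j" if "i < j" "j < Suc k" for i j
    using Suc.prems(2) that by (auto simp: strict_mono_on_def)
  have rge: "r i \<ge> r 0 + i" if "i < Suc k" for i
    using that proof (induction i)
    case (Suc i) then show ?case using rm[of i "Suc i"] by auto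
  qed auto
  have cge: "c i \<ge> c 0 + i" if "i < Suc k" for i
    using that proof (induction i)
    case (Suc i) then show ?case using cm[of i "Suc i"] by auto
  qed auto
  define A where "A = mat (Suc k) (Suc k) (\<lambda>(i, j). ?J (r i) (c j))"
  have A: "A \<in> carrier_mat (Suc k) (Suc k)" by (simp add: A_def)
  have mA: "inf_minor ?J (Suc k) r c = det A" by (simp add: inf_minor_def A_def)
  show ?case
  proof (cases "r k \<ge> 2")
    case big: True
    show ?thesis
    proof (cases "c k = r k + 1")
      case True
      have "det A = (\<Sum>j<Suc k. A $$ (k,j) * cofactor A k j)"
        by (rule laplace_expansion_row[OF A]) simp
      also have "\<dots> = (\<Sum>j\<in>{k}. A $$ (k,j) * cofactor A k j)"
      proof (rule sum.mono_neutral_right)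
        show "\<forall>j\<in>{..<Suc k} - {k}. A $$ (k, j) * cofactor A k j = 0"
        proof
          fix j assume j: "j \<in> {..<Suc k} - {k}"
          then have "c j < c k" using cm[of j k] by auto
          then show "A $$ (k, j) * cofactor A k j = 0"
            using j True big by (simp add: A_def Jrow_big[OF H])
        qed
      qed auto
      also have "\<dots> = det (mat_delete A k k)"
        using True big by (simp add: A_def Jrow_big[OF H] cofactor_def)
      also have "mat_delete A k k = mat k k (\<lambda>(i, j). ?J (r i) (c j))"
        by (rule eq_matI) (auto simp: A_def mat_delete_def)
      also have "det \<dots> = inf_minor ?J k r c" by (simp add: inf_minor_def)
      finally have "det A = inf_minor ?J k r c" .
      moreover have "inf_minor ?J k r c \<ge> 0"
        using Suc.IH Suc.prems by (auto simp: strict_mono_on_def)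
      ultimately show ?thesis using mA by simp
    next
      case False
      show ?thesis
      proof (cases "c k > r k + 1")
        case True
        have "det A = (\<Sum>i<Suc k. A $$ (i,k) * cofactor A i k)"
          by (rule laplace_expansion_column[OF A]) simp
        also have "\<dots> = 0"
        proof (rule sum.neutral, rule ballI)
          fix i assume i: "i \<in> {..<Suc k}"
          then have "r i \<le> r k" using rm[of i k] by (cases "i = k") auto
          then show "A $$ (i, k) * cofactor A i k = 0"
            using i True by (simp add: A_def Jcol_big)
        qed
        finally show ?thesis using mA by simp
      next
        case False2: False
        have "det A = (\<Sum>j<Suc k. A $$ (k,j) * cofactor A k j)"
          by (rule laplace_expansion_row[OF A]) simp
        also have "\<dots> = 0"
        proof (rule sum.neutral, rule ballI)
          fix j assume j: "j \<in> {..<Suc k}"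
          then have "c j \<le> c k" using cm[of j k] by (cases "j = k") auto
          then show "A $$ (k, j) * cofactor A k j = 0"
            using j False False2 big by (simp add: A_def Jrow_big[OF H])
        qed
        finally show ?thesis using mA by simp
      qed
    qed
  next
    case False
    then have "k \<le> 1" using rge[of k] by auto
    then consider "k = 0" | "k = 1" by linarith
    then show ?thesis
    proof cases
      case 1
      then show ?thesis using Jnn det1[of "\<lambda>(i, j). ?J (r i) (c j)"]
        by (simp add: inf_minor_def)
    next
      case 2
      have r0: "r 0 = 0" and r1: "r 1 = 1" using rge[of 1] False 2 rm[of 0 1] by auto
      have "inf_minor ?J (Suc k) r c = ?J 0 (c 0) * ?J 1 (c 1) - ?J 0 (c 1) * ?J 1 (c 0)"
        using det2[of "\<lambda>(i, j). ?J (r i) (c j)"] 2 r0 r1 by (simp add: inf_minor_def numeral_2_eq_2)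
      also have "\<dots> \<ge> 0"
      proof -
        have c01: "c 0 < c 1" using cm[of 0 1] 2 by auto
        consider "c 0 = 0 \<and> c 1 = 1" | "c 0 = 0 \<and> c 1 = 2" | "c 0 = 1 \<and> c 1 = 2" | "c 1 \<ge> 3" | "c 0 \<ge> 2"
          using c01 by linarith
        then show ?thesis
        proof cases
          case 1 then show ?thesis using D by (simp add: Jmat_def mult.commute)
        next
          case 2 then show ?thesis using pos by (simp add: Jmat_def)
        next
          case 3 then show ?thesis using pos by (simp add: Jmat_def)
        next
          case 4 then show ?thesis by (simp add: Jmat_def)
        next
          case 5 then show ?thesis using c01 by (simp add: Jmat_def)
        qed
      qed
      finally show ?thesis .
    qed
  qed
qed

theorem theorem3p4:
  fixes w z :: "nat \<Rightarrow> real"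
  shows "totally_positive (Jmat w z) \<longleftrightarrow>
    ((\<forall>k\<ge>2. w k = 0 \<and> z k = 0) \<and> w 0 \<ge> 0 \<and> w 1 \<ge> 0 \<and> z 0 \<ge> 0 \<and> z 1 \<ge> 0)
    \<and> w 0 * z 1 - w 1 * z 0 \<ge> 0"
proof
  assume TP: "totally_positive (Jmat w z)"
  have m1: "Jmat w z i j \<ge> 0" for i j
  proof -
    have "inf_minor (Jmat w z) 1 (\<lambda>_. i) (\<lambda>_. j) \<ge> 0"
      using TP unfolding totally_positive_def by (auto simp: strict_mono_on_def)
    then show ?thesis using det1[of "\<lambda>(a, b). Jmat w z i j"] by (simp add: inf_minor_def)
  qed
  have m2: "Jmat w z i0 j0 * Jmat w z i1 j1 - Jmat w z i0 j1 * Jmat w z i1 j0 \<ge> 0"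
    if "i0 < i1" "j0 < j1" for i0 i1 j0 j1
  proof -
    let ?r = "\<lambda>i. if i = 0 then i0 else i1" and ?c = "\<lambda>i. if i = 0 then j0 else j1"
    have "inf_minor (Jmat w z) 2 ?r ?c \<ge> 0"
      using TP that unfolding totally_positive_def by (auto simp: strict_mono_on_def)
    then show ?thesis using det2[of "\<lambda>(i, j). Jmat w z (?r i) (?c j)"] by (simp add: inf_minor_def)
  qed
  have big: "w k = 0 \<and> z k = 0" if "k \<ge> 2" for k
  proof -
    have "w k \<le> 0" using m2[of 1 k 0 2] that by (simp add: Jmat_def)
    moreover have "z k \<le> 0" using m2[of 1 k 1 2] that by (simp add: Jmat_def)
    moreover have "w k \<ge> 0" "z k \<ge> 0" using m1[of k 0] m1[of k 1] by (auto simp: Jmat_def)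
    ultimately show ?thesis by simp
  qed
  show "((\<forall>k\<ge>2. w k = 0 \<and> z k = 0) \<and> w 0 \<ge> 0 \<and> w 1 \<ge> 0 \<and> z 0 \<ge> 0 \<and> z 1 \<ge> 0)
    \<and> w 0 * z 1 - w 1 * z 0 \<ge> 0"
    using big m1[of 0 0] m1[of 1 0] m1[of 0 1] m1[of 1 1] m2[of 0 1 0 1] by (auto simp: Jmat_def algebra_simps)
next
  assume "((\<forall>k\<ge>2. w k = 0 \<and> z k = 0) \<and> w 0 \<ge> 0 \<and> w 1 \<ge> 0 \<and> z 0 \<ge> 0 \<and> z 1 \<ge> 0)
    \<and> w 0 * z 1 - w 1 * z 0 \<ge> 0"
  then show "totally_positive (Jmat w z)"
    unfolding totally_positive_def using minor_nonneg by blast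
qed

end
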